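(* Let $L_w = BWB^\top\in\mathbb{R}^{n\times n}$ be the weighted Laplacian of a connected undirected graph with nonnegative edge weights (so that its second smallest eigenvalue is positive), and let $E\in\mathbb{R}^{n\times k}$ be a port matrix. Consider the system $\dot x = -L_w x + E d$, $y=E^\top x$, with transfer matrix $\mathbb{G}(s)=E^\top(sI+L_w)^{-1}E$. Let $\gamma>0$. If $\|\mathbb{G}\|_\infty\le\gamma$, then $P=\gamma I_n$ satisfies the Riccati inequality $$-PL_w - L_w^\top P + EE^\top + \frac{1}{\gamma^2}PEE^\top P \preceq 0 .$$
   Context: A weighted undirected graph has node set $\{v_1,\dots,v_n\}$, edge set $\{\mathcal{E}_1,\dots,\mathcal{E}_m\}$ and edge weights $w_1,\dots,w_m$. Given an arbitrary orientation of each edge, the incidence matrix $B\in\mathbb{R}^{n\times m}$ has $B_{ij}=1$ if edge $\mathcal{E}_j$ starts at $v_i$, $B_{ij}=-1$ if it ends at $v_i$, and $0$ otherwise; $W=\mathrm{diag}(w_1,\dots,w_m)$ and the weighted Laplacian is $L_w=BWB^\top$. A port matrix $E\in\mathbb{R}^{n\times k}$ is a matrix each of whose columns has exactly one entry equal to $1$, exactly one entry equal to $-1$, and all other entries $0$. The $\mathcal{H}_\infty$-norm $\|\mathbb{G}\|_\infty$ is the induced $\mathcal{L}_2$-gain from $d$ to $y$ with $x(0)=0$, which equals $\sup_{\omega\in\mathbb{R}}\bar\sigma(\mathbb{G}(j\omega))$ with $\bar\sigma$ the largest singular value. $M\preceq 0$ means $-M$ is symmetric positive semidefinite. *)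

theory Defs
  imports "HOL-Analysis.Analysis"
begin

text \<open>Graph: nodes of finite type 'n, edges of finite type 'm; each edge j is oriented
  from fst (ends j) to snd (ends j). Weights w j.\<close>

definition incidence_matrix :: "('m \<Rightarrow> 'n \<times> 'n) \<Rightarrow> real^'m^'n" where
  "incidence_matrix ends = (\<chi> i j. if i = fst (ends j) then 1
                                    else if i = snd (ends j) then -1 else 0)"

definition diag_mat :: "('m \<Rightarrow> real) \<Rightarrow> real^'m^'m" where
  "diag_mat w = (\<chi> i j. if i = j then w i else 0)"

definition weighted_laplacian :: "('m::finite \<Rightarrow> 'n::finite \<times> 'n) \<Rightarrow> ('m \<Rightarrow> real) \<Rightarrow> real^'n^'n" where
  "weighted_laplacian ends w =
     incidence_matrix ends ** diag_mat w ** transpose (incidence_matrix ends)"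

definition graph_connected :: "('m \<Rightarrow> 'n \<times> 'n) \<Rightarrow> ('m \<Rightarrow> real) \<Rightarrow> bool" where
  "graph_connected ends w \<longleftrightarrow>
     (\<forall>u v. (u, v) \<in> ({(a, b). \<exists>j. w j > 0 \<and> (ends j = (a, b) \<or> ends j = (b, a))})\<^sup>*)"

definition port_matrix :: "real^'k^'n \<Rightarrow> bool" where
  "port_matrix E \<longleftrightarrow>
     (\<forall>j. \<exists>a b. a \<noteq> b \<and> (\<forall>i. E $ i $ j = (if i = a then 1 else if i = b then -1 else 0)))"

definition cmat :: "real^'b^'a \<Rightarrow> complex^'b^'a" where
  "cmat M = (\<chi> i j. complex_of_real (M $ i $ j))"

definition transfer_matrix :: "real^'n::finite^'n \<Rightarrow> real^'k^'n \<Rightarrow> complex \<Rightarrow> complex^'k^'k" where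
  "transfer_matrix L E s =
     transpose (cmat E) ** matrix_inv ((\<chi> i j. if i = j then s else 0) + cmat L) ** cmat E"

text \<open>Largest singular value = operator norm induced by the Euclidean norm on complex^'k.\<close>
definition max_sv :: "complex^'k^'l \<Rightarrow> real" where
  "max_sv M = onorm (\<lambda>v. M *v v)"

text \<open>H-infinity norm: sup over frequencies of the largest singular value of G(j\<omega>).
  The point \<omega> = 0 (where s I + L is singular) is omitted; G extends continuously there.\<close>
definition hinf_norm :: "real^'n^'n \<Rightarrow> real^'k^'n \<Rightarrow> ereal" where
  "hinf_norm L E = (SUP \<omega>\<in>{\<omega>::real. \<omega> \<noteq> 0}. ereal (max_sv (transfer_matrix L E (\<i> * complex_of_real \<omega>))))"

definition neg_semidef :: "real^'n^'n \<Rightarrow> bool" where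
  "neg_semidef M \<longleftrightarrow> transpose M = M \<and> (\<forall>x. x \<bullet> (M *v x) \<le> 0)"

end

theory Submission imports Defs begin

definition rv :: "complex^'n \<Rightarrow> real^'n" where "rv u = (\<chi> i. Re (u$i))"
definition iv :: "complex^'n \<Rightarrow> real^'n" where "iv u = (\<chi> i. Im (u$i))"
definition cv :: "real^'n \<Rightarrow> complex^'n" where "cv v = (\<chi> i. complex_of_real (v$i))"

lemma rv_cmat: "rv (cmat M *v u) = M *v rv u"
  by (simp add: rv_def cmat_def matrix_vector_mult_def vec_eq_iff Re_sum)
lemma iv_cmat: "iv (cmat M *v u) = M *v iv u"
  by (simp add: iv_def cmat_def matrix_vector_mult_def vec_eq_iff Im_sum)
lemma cmat_cv: "cmat M *v cv v = cv (M *v v)"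
  by (simp add: cv_def cmat_def matrix_vector_mult_def vec_eq_iff)
lemma rv_cv[simp]: "rv (cv v) = v" by (simp add: rv_def cv_def vec_eq_iff)
lemma iv_cv[simp]: "iv (cv v) = 0" by (simp add: iv_def cv_def vec_eq_iff)
lemma transpose_cmat: "transpose (cmat M) = cmat (transpose M)"
  by (simp add: transpose_def cmat_def vec_eq_iff)
lemma norm_sq_c: "norm u ^ 2 = norm (rv u) ^ 2 + norm (iv u) ^ 2"
  by (simp add: power2_norm_eq_inner inner_vec_def inner_complex_def rv_def iv_def sum.distrib)
lemma norm_cv: "norm (cv v) = norm v"
proof -
  have "norm (cv v) ^ 2 = norm v ^ 2" using norm_sq_c[of "cv v"] by simp
  then show ?thesis by (simp add: power2_eq_iff_nonneg)
qed
lemma diag_mult: "((\<chi> i j. if i = j then s else 0) *v u) = s *s u"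
proof -
  have "\<And>i. (\<Sum>j\<in>UNIV. (if i = j then s else 0) * u $ j) = s * u $ i"
  proof -
    fix i
    have "(\<Sum>j\<in>UNIV. (if i = j then s else 0) * u $ j) = (\<Sum>j\<in>UNIV. if i = j then s * u $ j else 0)"
      by (rule sum.cong) auto
    then show "(\<Sum>j\<in>UNIV. (if i = j then s else 0) * u $ j) = s * u $ i" by simp
  qed
  then show ?thesis by (simp add: matrix_vector_mult_def vec_eq_iff)
qed
lemma rv_add: "rv (a + b) = rv a + rv b" by (simp add: rv_def vec_eq_iff)
lemma iv_add: "iv (a + b) = iv a + iv b" by (simp add: iv_def vec_eq_iff)
lemma rv_scl: "rv ((\<i> * of_real w) *s u) = - w *\<^sub>R iv u" by (simp add: rv_def iv_def vec_eq_iff)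
lemma iv_scl: "iv ((\<i> * of_real w) *s u) = w *\<^sub>R rv u" by (simp add: rv_def iv_def vec_eq_iff)
lemma rv_zero[simp]: "rv 0 = 0" by (simp add: rv_def vec_eq_iff)
lemma iv_zero[simp]: "iv 0 = 0" by (simp add: iv_def vec_eq_iff)
lemma rv_iv_eq: "u = 0 \<longleftrightarrow> rv u = 0 \<and> iv u = 0"
  by (auto simp: rv_def iv_def vec_eq_iff complex_eq_iff)

lemma sym_dot: assumes "transpose L = L" shows "x \<bullet> (L *v y) = y \<bullet> (L *v (x::real^'n))"
  by (metis assms dot_lmul_matrix inner_commute transpose_matrix_vector)

lemma freq:
  fixes L :: "real^'n::finite^'n" and E :: "real^'k::finite^'n" and v :: "real^'k"
  assumes sym: "transpose L = L" and w: "w \<noteq> 0"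
    and bound: "max_sv (transfer_matrix L E (\<i> * complex_of_real w)) \<le> \<gamma>"
  shows "\<exists>p q. L *v p - w *\<^sub>R q = E *v v \<and> L *v q + w *\<^sub>R p = 0 \<and>
     norm (transpose E *v p)^2 + norm (transpose E *v q)^2 \<le> (\<gamma> * norm v)^2"
proof -
  define A :: "complex^'n^'n" where "A = (\<chi> i j. if i = j then \<i> * complex_of_real w else 0) + cmat L"
  have Au: "A *v u = (\<i> * complex_of_real w) *s u + cmat L *v u" for u
    by (simp add: A_def matrix_vector_mult_add_rdistrib diag_mult)
  have rA: "rv (A *v u) = L *v rv u - w *\<^sub>R iv u" for u
    by (simp add: Au rv_add rv_scl rv_cmat)
  have iA: "iv (A *v u) = L *v iv u + w *\<^sub>R rv u" for u
    by (simp add: Au iv_add iv_scl iv_cmat)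
  have ker: "A *v u = 0 \<longrightarrow> u = 0" for u
  proof
    assume "A *v u = 0"
    then have e1: "L *v rv u = w *\<^sub>R iv u" and e2: "L *v iv u = - w *\<^sub>R rv u"
      using rA[of u] iA[of u] by (auto simp: algebra_simps eq_neg_iff_add_eq_0)
    have "iv u \<bullet> (L *v rv u) = rv u \<bullet> (L *v iv u)" by (rule sym_dot[OF sym])
    then have "w * (iv u \<bullet> iv u) = - w * (rv u \<bullet> rv u)" using e1 e2 by simp
    then have "w * (iv u \<bullet> iv u + rv u \<bullet> rv u) = 0" by (simp add: algebra_simps)
    then have "iv u \<bullet> iv u + rv u \<bullet> rv u = 0" using w by simp
    then have "iv u = 0 \<and> rv u = 0"
      by (metis add_nonneg_eq_0_iff inner_eq_zero_iff inner_ge_zero)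
    then show "u = 0" using rv_iv_eq by blast
  qed
  have "invertible A"
    unfolding invertible_left_inverse matrix_left_invertible_ker using ker by blast
  then have AA: "A ** matrix_inv A = mat 1"
    unfolding invertible_def matrix_inv_def by (rule someI2_ex) auto
  define u where "u = matrix_inv A *v (cmat E *v cv v)"
  have Aeq: "A *v u = cv (E *v v)"
    unfolding u_def by (simp add: matrix_vector_mul_assoc AA cmat_cv)
  have G: "transfer_matrix L E (\<i> * complex_of_real w) *v cv v = transpose (cmat E) *v u"
    unfolding transfer_matrix_def u_def A_def by (simp add: matrix_vector_mul_assoc matrix_mul_assoc)
  have "norm (transfer_matrix L E (\<i> * complex_of_real w) *v cv v)
        \<le> max_sv (transfer_matrix L E (\<i> * complex_of_real w)) * norm (cv v)"
    unfolding max_sv_def by (rule onorm) simp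
  also have "\<dots> \<le> \<gamma> * norm v" using bound by (simp add: norm_cv mult_right_mono)
  finally have nb: "norm (transpose (cmat E) *v u) \<le> \<gamma> * norm v" using G by simp
  have "norm (transpose E *v rv u)^2 + norm (transpose E *v iv u)^2 = norm (transpose (cmat E) *v u)^2"
    by (simp add: norm_sq_c transpose_cmat rv_cmat iv_cmat)
  also have "\<dots> \<le> (\<gamma> * norm v)^2" using nb by (simp add: power_mono)
  finally have n2: "norm (transpose E *v rv u)^2 + norm (transpose E *v iv u)^2 \<le> (\<gamma> * norm v)^2" .
  have "L *v rv u - w *\<^sub>R iv u = E *v v" using rA[of u] Aeq by simp
  moreover have "L *v iv u + w *\<^sub>R rv u = 0" using iA[of u] Aeq by simp
  ultimately show ?thesis using n2 by blast
qed

lemma lim_sqrt: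
  fixes t c d :: real
  assumes d: "d \<ge> 0" and h: "\<And>w. w > 0 \<Longrightarrow> t \<le> c + d * sqrt w"
  shows "t \<le> c"
proof (rule ccontr)
  assume "\<not> t \<le> c"
  then have tc: "t > c" by simp
  show False
  proof (cases "d = 0")
    case True then show ?thesis using h[of 1] tc by simp
  next
    case False
    then have dp: "d > 0" using d by simp
    define w where "w = ((t - c) / (2 * d))^2"
    have wp: "w > 0" using tc dp by (simp add: w_def)
    have "sqrt w = (t - c) / (2 * d)" using tc dp by (simp add: w_def)
    then have "d * sqrt w = (t - c) / 2" using dp by simp
    then show ?thesis using h[OF wp] tc by simp
  qed
qed

lemma dot_mat: "(a::real^'n) \<bullet> (M *v b) = (transpose M *v a) \<bullet> b"
  by (simp add: dot_lmul_matrix[symmetric])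

lemma key:
  fixes L :: "real^'n::finite^'n" and C :: "real^'m::finite^'n" and E :: "real^'k::finite^'n"
  assumes LC: "L = C ** transpose C" and gpos: "\<gamma> > 0"
    and freqs: "\<And>w v. w > 0 \<Longrightarrow> \<exists>p q. L *v p - w *\<^sub>R q = E *v v \<and> L *v q + w *\<^sub>R p = 0 \<and>
     norm (transpose E *v p)^2 + norm (transpose E *v q)^2 \<le> (\<gamma> * norm v)^2"
  shows "norm (transpose E *v x)^2 \<le> \<gamma> * (x \<bullet> (L *v x))"
proof -
  define T where "T = transpose C"
  have qf: "a \<bullet> (L *v b) = (T *v a) \<bullet> (T *v b)" for a b
    unfolding LC T_def by (simp add: matrix_vector_mul_assoc[symmetric] dot_mat)
  have sym: "a \<bullet> (L *v b) = b \<bullet> (L *v a)" for a b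
    by (simp add: qf inner_commute)
  define v where "v = transpose E *v x"
  define V where "V = norm v"
  have qx: "x \<bullet> (L *v x) = norm (T *v x)^2" by (simp add: qf power2_norm_eq_inner)
  have main: "V \<le> norm (T *v x) * sqrt \<gamma> + norm x * sqrt \<gamma> * sqrt w" if wp: "w > 0" and Vp: "V > 0" for w
  proof -
    obtain p q where e1: "L *v p - w *\<^sub>R q = E *v v" and e2: "L *v q + w *\<^sub>R p = 0"
      and nb: "norm (transpose E *v p)^2 + norm (transpose E *v q)^2 \<le> (\<gamma> * norm v)^2"
      using freqs[OF wp] by blast
    define z where "z = E *v v"
    have Lq: "L *v q = - w *\<^sub>R p" using e2 by (simp add: eq_neg_iff_add_eq_0)
    have Lp: "L *v p = z + w *\<^sub>R q" using e1 by (simp add: z_def algebra_simps)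
    have xz: "x \<bullet> z = V^2" unfolding z_def V_def v_def by (simp add: dot_mat power2_norm_eq_inner)
    have zp: "z \<bullet> p = v \<bullet> (transpose E *v p)" unfolding z_def by (simp add: dot_mat inner_commute)
    have zq: "z \<bullet> q = v \<bullet> (transpose E *v q)" unfolding z_def by (simp add: dot_mat inner_commute)
    have qLq: "q \<bullet> (L *v q) = - w * (q \<bullet> p)" by (simp add: Lq inner_commute)
    have pLp: "p \<bullet> (L *v p) = z \<bullet> p + w * (q \<bullet> p)" by (simp add: Lp inner_add_right inner_commute)
    have zp2: "z \<bullet> p = p \<bullet> (L *v p) + q \<bullet> (L *v q)" using qLq pLp by simp
    have "q \<bullet> (L *v p) = z \<bullet> q + w * (q \<bullet> q)" by (simp add: Lp inner_add_right inner_commute)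
    moreover have "q \<bullet> (L *v p) = - w * (p \<bullet> p)" using sym[of q p] by (simp add: Lq)
    ultimately have zq2: "z \<bullet> q = - (w * (p \<bullet> p + q \<bullet> q))" by (simp add: algebra_simps)
    define a where "a = p \<bullet> (L *v p) + q \<bullet> (L *v q)"
    define b where "b = w * (p \<bullet> p + q \<bullet> q)"
    have a0: "a \<ge> 0" unfolding a_def by (simp add: qf)
    have b0: "b \<ge> 0" unfolding b_def using wp by simp
    have c1: "(z \<bullet> p)^2 \<le> V^2 * norm (transpose E *v p)^2"
      unfolding zp V_def by (metis Cauchy_Schwarz_ineq power2_norm_eq_inner)
    have c2: "(z \<bullet> q)^2 \<le> V^2 * norm (transpose E *v q)^2"
      unfolding zq V_def by (metis Cauchy_Schwarz_ineq power2_norm_eq_inner)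
    have "a^2 + b^2 \<le> V^2 * (norm (transpose E *v p)^2 + norm (transpose E *v q)^2)"
    proof -
      have "a^2 = (z \<bullet> p)^2" using zp2 a_def by simp
      moreover have "b^2 = (z \<bullet> q)^2" using zq2 b_def by (simp add: power2_eq_square)
      ultimately show ?thesis using c1 c2 by (simp add: algebra_simps)
    qed
    also have "\<dots> \<le> V^2 * (\<gamma> * V)^2" using nb V_def by (simp add: mult_left_mono)
    finally have ab: "a^2 + b^2 \<le> (\<gamma> * V^2)^2" by (simp add: power_mult_distrib power2_eq_square mult_ac)
    have gV: "\<gamma> * V^2 \<ge> 0" using gpos by simp
    have aa: "a \<le> \<gamma> * V^2"
      by (rule power2_le_imp_le) (use ab gV zero_le_power2[of b] in linarith, use gV in simp)
    have bb: "b \<le> \<gamma> * V^2"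
      by (rule power2_le_imp_le) (use ab gV zero_le_power2[of a] in linarith, use gV in simp)
    have Tp2: "norm (T *v p)^2 \<le> \<gamma> * V^2"
    proof -
      have "norm (T *v p)^2 + norm (T *v q)^2 \<le> \<gamma> * V^2"
        using aa unfolding a_def by (simp add: qf power2_norm_eq_inner[symmetric])
      moreover have "norm (T *v q)^2 \<ge> 0" by simp
      ultimately show ?thesis by linarith
    qed
    have Tp: "norm (T *v p) \<le> sqrt \<gamma> * V"
      using Tp2 real_le_rsqrt[OF Tp2] gpos V_def by (simp add: real_sqrt_mult)
    have "(w * norm q)^2 \<le> w * b" unfolding b_def using wp
      by (simp add: power2_eq_square power2_norm_eq_inner[symmetric] algebra_simps
        mult_left_mono)
    also have "\<dots> \<le> w * (\<gamma> * V^2)" using bb wp by simp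
    finally have wq2: "(w * norm q)^2 \<le> (sqrt \<gamma> * sqrt w * V)^2"
      using gpos wp by (simp add: power_mult_distrib algebra_simps)
    have wq: "w * norm q \<le> sqrt \<gamma> * sqrt w * V"
      by (rule power2_le_imp_le[OF wq2]) (use gpos wp in \<open>simp add: V_def\<close>)
    have "V^2 = x \<bullet> (L *v p) - w * (x \<bullet> q)"
      using xz by (simp add: Lp inner_add_right)
    also have "\<dots> \<le> norm (T *v x) * norm (T *v p) + w * (norm x * norm q)"
    proof -
      have "x \<bullet> (L *v p) \<le> norm (T *v x) * norm (T *v p)" by (simp add: qf norm_cauchy_schwarz)
      moreover have "- (x \<bullet> q) \<le> norm x * norm q"
        by (metis Cauchy_Schwarz_ineq2 abs_le_iff)
      moreover have "w * (- (x \<bullet> q)) \<le> w * (norm x * norm q)"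
        using calculation(2) wp by (intro mult_left_mono) auto
      ultimately show ?thesis by simp
    qed
    also have "\<dots> \<le> norm (T *v x) * (sqrt \<gamma> * V) + norm x * (sqrt \<gamma> * sqrt w * V)"
      using Tp wq by (smt (verit, best) mult_left_mono norm_ge_zero mult.assoc mult.left_commute)
    finally have "V * V \<le> (norm (T *v x) * sqrt \<gamma> + norm x * sqrt \<gamma> * sqrt w) * V"
      by (simp add: power2_eq_square algebra_simps)
    then show ?thesis using Vp by simp
  qed
  show ?thesis
  proof (cases "V = 0")
    case True then show ?thesis using gpos by (simp add: qx V_def v_def)
  next
    case False
    then have Vp: "V > 0" by (simp add: V_def)
    have "V \<le> norm (T *v x) * sqrt \<gamma>"
      by (rule lim_sqrt[of "norm x * sqrt \<gamma>"]) (use main Vp gpos in auto)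
    then have "V^2 \<le> (norm (T *v x) * sqrt \<gamma>)^2" using Vp by (simp add: power_mono)
    then show ?thesis using gpos by (simp add: qx V_def v_def power_mult_distrib mult.commute)
  qed
qed


lemma neg_mv: "(- A) *v (x::real^'n) = - (A *v x)"
  by (simp add: matrix_vector_mult_def vec_eq_iff sum_negf)

lemma scal_mv: "(c *\<^sub>R A) *v (x::real^'n) = c *\<^sub>R (A *v x)"
  by (simp add: scaleR_matrix_vector_assoc)

lemma DD: "diag_mat (\<lambda>j. sqrt (w j)) ** transpose (diag_mat (\<lambda>j. sqrt (w j))) = diag_mat w"
  if "\<And>j. w j \<ge> 0" for w :: "'m::finite \<Rightarrow> real"
proof -
  have "(\<Sum>k\<in>UNIV. (if i = k then sqrt (w i) else 0) * (if j = k then sqrt (w j) else 0))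
        = (if i = j then w i else 0)" for i j
  proof -
    have "(\<Sum>k\<in>UNIV. (if i = k then sqrt (w i) else 0) * (if j = k then sqrt (w j) else 0))
        = (\<Sum>k\<in>UNIV. if k = i then (if i = j then w i else 0) else 0)"
      by (rule sum.cong) (auto simp: that)
    then show ?thesis by simp
  qed
  then show ?thesis
    by (simp add: diag_mat_def matrix_matrix_mult_def transpose_def vec_eq_iff)
qed

lemma tr_sym:
  fixes A B :: "real^'n^'n"
  assumes "transpose A = A" "transpose B = B"
  shows "transpose ((A + A) - (c *\<^sub>R B + c *\<^sub>R B)) = (A + A) - (c *\<^sub>R B + c *\<^sub>R B)"
proof -
  have a: "A $ j $ i = A $ i $ j" for i j
    using assms(1) unfolding transpose_def vec_eq_iff by simp
  have b: "B $ j $ i = B $ i $ j" for i j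
    using assms(2) unfolding transpose_def vec_eq_iff by simp
  show ?thesis by (simp add: transpose_def vec_eq_iff a b)
qed

theorem theorem2:
  fixes ends :: "'m::finite \<Rightarrow> 'n::finite \<times> 'n"
    and w :: "'m \<Rightarrow> real"
    and E :: "real^'k::finite^'n"
    and \<gamma> :: real
  assumes no_loops: "\<And>j. fst (ends j) \<noteq> snd (ends j)"
    and w_nonneg: "\<And>j. w j \<ge> 0"
    and connected: "graph_connected ends w"
    and port: "port_matrix E"
    and gamma_pos: "\<gamma> > 0"
    and hinf: "hinf_norm (weighted_laplacian ends w) E \<le> ereal \<gamma>"
  shows "neg_semidef
           (- ((\<gamma> *\<^sub>R mat 1) ** weighted_laplacian ends w)
            - transpose (weighted_laplacian ends w) ** (\<gamma> *\<^sub>R mat 1)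
            + E ** transpose E
            + (1 / \<gamma>\<^sup>2) *\<^sub>R ((\<gamma> *\<^sub>R mat 1) ** E ** transpose E ** (\<gamma> *\<^sub>R mat 1)))"
proof -
  define L where "L = weighted_laplacian ends w"
  define C where "C = incidence_matrix ends ** diag_mat (\<lambda>j. sqrt (w j))"
  have LC: "L = C ** transpose C"
    unfolding L_def C_def weighted_laplacian_def
    by (simp add: matrix_transpose_mul matrix_mul_assoc DD[OF w_nonneg, symmetric])
  have symL: "transpose L = L"
    unfolding LC by (simp add: matrix_transpose_mul)
  have bound: "max_sv (transfer_matrix L E (\<i> * complex_of_real \<omega>)) \<le> \<gamma>" if "\<omega> \<noteq> 0" for \<omega>
  proof -
    have "ereal (max_sv (transfer_matrix L E (\<i> * complex_of_real \<omega>))) \<le> hinf_norm L E"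
      unfolding hinf_norm_def using that by (intro SUP_upper) auto
    then show ?thesis using hinf L_def by (metis ereal_less_eq(3) order_trans)
  qed
  have freqs: "\<exists>p q. L *v p - \<omega> *\<^sub>R q = E *v v \<and> L *v q + \<omega> *\<^sub>R p = 0 \<and>
     norm (transpose E *v p)^2 + norm (transpose E *v q)^2 \<le> (\<gamma> * norm v)^2" if "\<omega> > 0" for \<omega> v
    using freq[OF symL _ bound, of \<omega> v] that by simp
  have kx: "norm (transpose E *v x)^2 \<le> \<gamma> * (x \<bullet> (L *v x))" for x
    by (rule key[OF LC gamma_pos freqs])
  define M where "M = (- ((\<gamma> *\<^sub>R mat 1) ** L)
            - transpose L ** (\<gamma> *\<^sub>R mat 1)
            + E ** transpose E
            + (1 / \<gamma>\<^sup>2) *\<^sub>R ((\<gamma> *\<^sub>R mat 1) ** E ** transpose E ** (\<gamma> *\<^sub>R mat 1)))"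
  have Mv: "M *v x = (E *v (transpose E *v x) + E *v (transpose E *v x)) - (\<gamma> *\<^sub>R (L *v x) + \<gamma> *\<^sub>R (L *v x))" for x
    using gamma_pos
    by (simp add: M_def matrix_vector_mult_add_rdistrib matrix_vector_mult_diff_rdistrib neg_mv
        scal_mv matrix_vector_mul_assoc[symmetric] symL matrix_vector_mult_scaleR
        power2_eq_square algebra_simps)
  have Meq: "M = (E ** transpose E + E ** transpose E) - (\<gamma> *\<^sub>R L + \<gamma> *\<^sub>R L)"
    unfolding matrix_eq
    by (intro allI) (simp only: Mv matrix_vector_mult_diff_rdistrib matrix_vector_mult_add_rdistrib scal_mv matrix_vector_mul_assoc[symmetric])
  have sE: "transpose (E ** transpose E) = E ** transpose E"
    by (simp add: matrix_transpose_mul)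
  have tM: "transpose M = M"
    unfolding Meq by (rule tr_sym[OF sE symL])
  have "x \<bullet> (M *v x) \<le> 0" for x
  proof -
    have e1: "x \<bullet> (M *v x) = (x \<bullet> (E *v (transpose E *v x)) + x \<bullet> (E *v (transpose E *v x)))
        - (\<gamma> * (x \<bullet> (L *v x)) + \<gamma> * (x \<bullet> (L *v x)))"
      by (simp only: Mv inner_diff_right inner_add_right inner_scaleR_right)
    have e2: "x \<bullet> (E *v (transpose E *v x)) = norm (transpose E *v x)^2"
      by (simp only: dot_mat power2_norm_eq_inner)
    show ?thesis using kx[of x] e1 e2 by linarith
  qed
  then show ?thesis using tM unfolding neg_semidef_def M_def L_def by blast
qed

end
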